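(* Let $h:B^d\to{\mathbb R}$ be a $C^2$ function such that $L^{-1}\operatorname{Hess}h$ is $\Gamma$-invariant, i.e. for all $A\in\Gamma$, $x\in B^d$, $X,Y\in{\mathbb R}^d$, $$L(x)^{-1}\operatorname{Hess}h(x)(X,Y)=L(A\cdot x)^{-1}\operatorname{Hess}h(A\cdot x)\big(DA(x)X,DA(x)Y\big),$$ where $DA(x)$ is the differential of $y\mapsto A\cdot y$ at $x$. Then there exists a unique cocycle $\tau\in Z^1(\Gamma,{\mathbb R}^{d,1})$ such that $h$ is $\tau$-equivariant.
   Context: Notation. $B^d$ denotes the open Euclidean unit ball of ${\mathbb R}^d$; $\langle\cdot,\cdot\rangle_d$ and $\|\cdot\|$ are the Euclidean inner product and norm, $L(x)=\sqrt{1-\|x\|^2}$, and $\operatorname{Hess}$ is the Euclidean Hessian. Minkowski space ${\mathbb R}^{d,1}$ is ${\mathbb R}^{d+1}$ with $\langle x,y\rangle_{d,1}=x_1y_1+\dots+x_dy_d-x_{d+1}y_{d+1}$; for $v\in{\mathbb R}^{d,1}$ write $v=(\bar v,v_{d+1})$. $O_+(d,1)$ is the group of linear maps preserving $\langle\cdot,\cdot\rangle_{d,1}$ and the sheet $\{\langle x,x\rangle_{d,1}=-1,\ x_{d+1}>0\}$. For $A\in O_+(d,1)$, $x\in B^d$, $A\cdot x\in B^d$ is the unique point with $A\binom{x}{1}\in{\mathbb R}_{>0}\binom{A\cdot x}{1}$; this is an isometry of the Klein metric $g_{{\mathbb H}^d}(x)(X,Y)=L(x)^{-2}\langle X,Y\rangle_d+L(x)^{-4}\langle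 x,X\rangle_d\langle x,Y\rangle_d$. Action on functions. $((A,v)h)(x)=\frac{L(x)}{L(A^{-1}\cdot x)}h(A^{-1}\cdot x)+\langle x,\bar v\rangle_d-v_{d+1}$. Group setup. $d\ge2$ and $\Gamma\subset O_+(d,1)$ is a subgroup such that the action $x\mapsto A\cdot x$ of $\Gamma$ on $B^d$ is free, properly discontinuous and cocompact, so that $M_\Gamma=(B^d,g_{{\mathbb H}^d})/\Gamma$ is a compact oriented hyperbolic manifold. A cocycle is a map $\tau:\Gamma\to{\mathbb R}^{d,1}$ with $\tau(AB)=\tau(A)+A\tau(B)$; they form the vector space $Z^1(\Gamma,{\mathbb R}^{d,1})$. For a cocycle $\tau$, a continuous $h:B^d\to{\mathbb R}$ is $\tau$-equivariant if $(A,\tau(A))h=h$ for all $A\in\Gamma$. *)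

theory Defs
  imports "HOL-Analysis.Analysis"
begin

text \<open>Euclidean space R^d is real^'n; Minkowski space R^{d,1} is real^('n option),
  where coordinate Some i is x_i and coordinate None is x_{d+1}.\<close>

type_synonym ('n) mvec = "real^('n option)"
type_synonym ('n) mmat = "real^('n option)^('n option)"

definition mink :: "'n::finite mvec \<Rightarrow> 'n mvec \<Rightarrow> real" where
  "mink v w = (\<Sum>i\<in>UNIV. v $ Some i * w $ Some i) - v $ None * w $ None"

definition vbar :: "'n::finite mvec \<Rightarrow> real^'n" where
  "vbar v = (\<chi> i. v $ Some i)"

definition lift :: "real^'n::finite \<Rightarrow> 'n mvec" where
  "lift x = (\<chi> j. case j of Some i \<Rightarrow> x $ i | None \<Rightarrow> 1)"

definition Oplus :: "('n::finite) mmat set" where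
  "Oplus = {A. (\<forall>v w. mink (A *v v) (A *v w) = mink v w) \<and>
               (\<forall>x. mink x x = -1 \<and> x $ None > 0 \<longrightarrow> (A *v x) $ None > 0)}"

text \<open>A \<cdot> x: the point of B^d with A (x,1) a positive multiple of (A\<cdot>x, 1).\<close>
definition act :: "('n::finite) mmat \<Rightarrow> real^'n \<Rightarrow> real^'n" where
  "act A x = (1 / (A *v lift x) $ None) *\<^sub>R vbar (A *v lift x)"

definition Lf :: "real^'n::finite \<Rightarrow> real" where
  "Lf x = sqrt (1 - (norm x)\<^sup>2)"

definition fun_act :: "('n::finite) mmat \<Rightarrow> 'n mvec \<Rightarrow> (real^'n \<Rightarrow> real) \<Rightarrow> real^'n \<Rightarrow> real" where
  "fun_act A v h x = Lf x / Lf (act (matrix_inv A) x) * h (act (matrix_inv A) x)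
                     + inner x (vbar v) - v $ None"

definition cocycle :: "('n::finite) mmat set \<Rightarrow> ('n mmat \<Rightarrow> 'n mvec) \<Rightarrow> bool" where
  "cocycle \<Gamma> \<tau> \<longleftrightarrow> (\<forall>A\<in>\<Gamma>. \<forall>B\<in>\<Gamma>. \<tau> (A ** B) = \<tau> A + A *v \<tau> B)"

definition equivariant :: "('n::finite) mmat set \<Rightarrow> ('n mmat \<Rightarrow> 'n mvec) \<Rightarrow> (real^'n \<Rightarrow> real) \<Rightarrow> bool" where
  "equivariant \<Gamma> \<tau> h \<longleftrightarrow> continuous_on (ball 0 1) h \<and>
     (\<forall>A\<in>\<Gamma>. \<forall>x\<in>ball 0 1. fun_act A (\<tau> A) h x = h x)"

definition C2_with_hessian :: "(real^'n::finite \<Rightarrow> real) \<Rightarrow> (real^'n) set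
     \<Rightarrow> (real^'n \<Rightarrow> real^'n \<Rightarrow> real^'n \<Rightarrow> real) \<Rightarrow> bool" where
  "C2_with_hessian h S Hs \<longleftrightarrow> (\<exists>G. (\<forall>x\<in>S. (h has_derivative (\<lambda>X. inner (G x) X)) (at x)) \<and>
      (\<forall>x\<in>S. \<exists>DG. (G has_derivative DG) (at x) \<and> (\<forall>X Y. Hs x X Y = inner (DG X) Y)) \<and>
      (\<forall>X Y. continuous_on S (\<lambda>x. Hs x X Y)))"

definition admissible_group :: "('n::finite) mmat set \<Rightarrow> bool" where
  "admissible_group \<Gamma> \<longleftrightarrow>
     \<Gamma> \<subseteq> Oplus \<and> mat 1 \<in> \<Gamma> \<and>
     (\<forall>A\<in>\<Gamma>. \<forall>B\<in>\<Gamma>. A ** B \<in> \<Gamma>) \<and> (\<forall>A\<in>\<Gamma>. matrix_inv A \<in> \<Gamma>) \<and>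
     (\<forall>A\<in>\<Gamma>. det A > 0) \<and>
     (\<forall>A\<in>\<Gamma>. \<forall>x\<in>ball 0 1. act A x = x \<longrightarrow> A = mat 1) \<and>
     (\<forall>K. compact K \<and> K \<subseteq> ball 0 1 \<longrightarrow> finite {A\<in>\<Gamma>. act A ` K \<inter> K \<noteq> {}}) \<and>
     (\<exists>K. compact K \<and> K \<subseteq> ball 0 1 \<and> (\<Union>A\<in>\<Gamma>. act A ` K) = ball 0 1)"

end

theory Submission
  imports Defs
begin


lemma minv: assumes "invertible (A::real^'m^'m)"
  shows "A ** matrix_inv A = mat 1" "matrix_inv A ** A = mat 1"
  using someI_ex[OF assms[unfolded invertible_def]] unfolding matrix_inv_def by auto

lemma minv_mult: fixes A B :: "real^'m^'m" assumes "invertible A" "invertible B"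
  shows "matrix_inv (A ** B) = matrix_inv B ** matrix_inv A"
proof -
  have e1: "(A ** B) ** (matrix_inv B ** matrix_inv A) = mat 1"
    by (simp add: matrix_mul_assoc[symmetric]) (simp add: matrix_mul_assoc minv(1)[OF assms(2)] minv(1)[OF assms(1)])
  have e2: "(matrix_inv B ** matrix_inv A) ** (A ** B) = mat 1"
    by (simp add: matrix_mul_assoc[symmetric]) (simp add: matrix_mul_assoc minv(2)[OF assms(2)] minv(2)[OF assms(1)])
  have i: "invertible (A ** B)" using e1 e2 unfolding invertible_def by blast
  have "matrix_inv (A ** B) = matrix_inv (A**B) ** ((A ** B) ** (matrix_inv B ** matrix_inv A))"
    by (simp add: e1)
  also have "\<dots> = (matrix_inv (A**B) ** (A ** B)) ** (matrix_inv B ** matrix_inv A)"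
    by (simp add: matrix_mul_assoc)
  also have "\<dots> = matrix_inv B ** matrix_inv A"
    by (simp add: minv(2)[OF i])
  finally show ?thesis .
qed

definition liftv :: "real^'n::finite \<Rightarrow> 'n mvec" where
  "liftv x = (\<chi> j. case j of Some i \<Rightarrow> x $ i | None \<Rightarrow> 0)"

definition mk :: "real^'n::finite \<Rightarrow> real \<Rightarrow> 'n mvec" where
  "mk a c = (\<chi> j. case j of Some i \<Rightarrow> a $ i | None \<Rightarrow> c)"

lemma lift_split: "lift x = liftv x + mk 0 1"
  by (simp add: vec_eq_iff lift_def liftv_def mk_def split: option.splits)

lemma liftv_linear: "bounded_linear (liftv :: real^'n::finite \<Rightarrow> _)"
proof -
  have "linear (liftv :: real^'n::finite \<Rightarrow> _)"
    by (rule linearI) (simp_all add: vec_eq_iff liftv_def split: option.splits)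
  then show ?thesis by (simp add: linear_conv_bounded_linear)
qed

lemma vbar_linear: "bounded_linear (vbar :: 'n::finite mvec \<Rightarrow> _)"
proof -
  have "linear (vbar :: 'n::finite mvec \<Rightarrow> _)"
    by (rule linearI) (simp_all add: vec_eq_iff vbar_def)
  then show ?thesis by (simp add: linear_conv_bounded_linear)
qed

lemma vbar_add: "vbar (v + w) = vbar v + vbar w" and vbar_0: "vbar 0 = 0"
  and vbar_scale: "vbar (c *\<^sub>R v) = c *\<^sub>R vbar v"
  by (simp_all add: vec_eq_iff vbar_def)

lemma mink_inner: "mink v w = inner (vbar v) (vbar w) - v $ None * w $ None"
  by (simp add: mink_def inner_vec_def vbar_def)

lemma mink_lift_self: "mink (lift x) (lift x) = (norm x)^2 - 1"
  by (simp add: mink_inner power2_norm_eq_inner vbar_def lift_def)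

lemma vbar_lift: "vbar (lift x) = x" and lift_None: "lift x $ None = 1"
  by (simp_all add: vec_eq_iff vbar_def lift_def)

lemma mink_scale: "mink (c *\<^sub>R v) w = c * mink v w"
  by (simp add: mink_inner vbar_scale algebra_simps)

lemma Lf_pos: "x \<in> ball 0 1 \<Longrightarrow> Lf x > 0"
  by (simp add: Lf_def abs_square_less_1)

lemma key:
  assumes B: "B \<in> Oplus" and x: "x \<in> ball (0::real^'n::finite) 1"
  shows "(B *v lift x) $ None > 0" "act B x \<in> ball 0 1"
    "Lf x = (B *v lift x) $ None * Lf (act B x)"
proof -
  let ?u = "B *v lift x" let ?t = "?u $ None"
  have nx: "norm x < 1" using x by simp
  have c: "Lf x > 0" using Lf_pos[OF x] .
  have Lx2: "(Lf x)^2 = 1 - (norm x)^2" unfolding Lf_def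
    using nx by (simp add: abs_square_less_1 less_imp_le) 
  define w where "w = (1 / Lf x) *\<^sub>R lift x"
  have "mink w w = -1" using c Lx2 unfolding w_def mink_scale
    by (simp add: mink_inner vbar_scale vbar_lift lift_None power2_norm_eq_inner[symmetric] field_simps power2_eq_square)
  moreover have "w $ None > 0" using c by (simp add: w_def lift_None)
  ultimately have "(B *v w) $ None > 0" using B unfolding Oplus_def by blast
  then show tpos: "?t > 0" using c by (simp add: w_def matrix_vector_mult_scaleR zero_less_divide_iff)
  have mm: "mink ?u ?u = (norm x)^2 - 1" using B mink_lift_self unfolding Oplus_def by auto
  have ueq: "vbar ?u = ?t *\<^sub>R act B x" using tpos by (simp add: act_def)
  have "mink ?u ?u = ?t^2 * ((norm (act B x))^2 - 1)"
    unfolding mink_inner ueq by (simp add: dot_square_norm power2_eq_square algebra_simps)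
  hence eq: "?t^2 * (1 - (norm (act B x))^2) = 1 - (norm x)^2" using mm by (simp add: algebra_simps)
  have p1: "1 - (norm x)^2 > 0" using nx by (simp add: abs_square_less_1)
  have p2: "?t^2 > 0" using tpos by simp
  have pos: "1 - (norm (act B x))^2 > 0" using eq p1 p2 by (metis zero_less_mult_iff not_less_iff_gr_or_eq) 
  then show "act B x \<in> ball 0 1" by (simp add: abs_square_less_1)
  have "Lf x = sqrt (?t^2 * (1 - (norm (act B x))^2))" unfolding Lf_def eq ..
  also have "\<dots> = ?t * Lf (act B x)" unfolding Lf_def real_sqrt_mult using tpos by simp
  finally show "Lf x = ?t * Lf (act B x)" .
qed



lemma u_deriv: "((\<lambda>x. B *v lift x) has_derivative (\<lambda>Y. B *v liftv Y)) (at x within S)"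
proof -
  have bl: "bounded_linear (\<lambda>Y. B *v liftv Y)"
    by (intro bounded_linear_compose[OF matrix_vector_mul_bounded_linear liftv_linear])
  have "((\<lambda>x. B *v liftv x + B *v mk 0 1) has_derivative (\<lambda>Y. B *v liftv Y)) (at x within S)"
    by (rule has_derivative_add_const[OF bounded_linear_imp_has_derivative[OF bl]])
  then show ?thesis by (simp add: lift_split matrix_vector_right_distrib)
qed

lemma t_deriv: "((\<lambda>x. (B *v lift x) $ j) has_derivative (\<lambda>Y. (B *v liftv Y) $ j)) (at x within S)"
  using bounded_linear.has_derivative[OF bounded_linear_vec_nth u_deriv] .

definition dact :: "('n::finite) mmat \<Rightarrow> real^'n \<Rightarrow> real^'n \<Rightarrow> real^'n" where
  "dact B x Y = (1 / (B *v lift x) $ None) *\<^sub>R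
     (vbar (B *v liftv Y) - (B *v liftv Y) $ None *\<^sub>R act B x)"

lemma act_deriv: assumes t: "(B *v lift x) $ None \<noteq> 0"
  shows "(act B has_derivative dact B x) (at x within S)"
proof -
  let ?t = "\<lambda>x. (B *v lift x) $ None"
  have d1: "((\<lambda>x. inverse (?t x)) has_derivative
     (\<lambda>h. - (inverse (?t x) * (B *v liftv h) $ None * inverse (?t x)))) (at x within S)"
    using has_derivative_compose[OF t_deriv has_derivative_inverse'[OF t]] .
  have d2: "((\<lambda>x. vbar (B *v lift x)) has_derivative (\<lambda>Y. vbar (B *v liftv Y))) (at x within S)"
    using bounded_linear.has_derivative[OF vbar_linear u_deriv] .
  have d: "((\<lambda>x. inverse (?t x) *\<^sub>R vbar (B *v lift x)) has_derivative
     (\<lambda>h. inverse (?t x) *\<^sub>R vbar (B *v liftv h) +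
        (- (inverse (?t x) * (B *v liftv h) $ None * inverse (?t x))) *\<^sub>R vbar (B *v lift x))) (at x within S)"
    by (rule has_derivative_scaleR[OF d1 d2])
  have e1: "(\<lambda>x. inverse (?t x) *\<^sub>R vbar (B *v lift x)) = act B"
    by (rule ext) (simp add: act_def divide_inverse)
  have e2: "(\<lambda>h. inverse (?t x) *\<^sub>R vbar (B *v liftv h) +
        (- (inverse (?t x) * (B *v liftv h) $ None * inverse (?t x))) *\<^sub>R vbar (B *v lift x)) = dact B x"
    by (rule ext) (simp add: dact_def act_def divide_inverse algebra_simps)
  show ?thesis using d unfolding e1 e2 .
qed



lemma lin_inner: assumes "linear (l::'a::euclidean_space \<Rightarrow> real)"
  shows "l x = inner (\<Sum>b\<in>Basis. l b *\<^sub>R b) x"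
proof -
  have "l x = l (\<Sum>b\<in>Basis. inner x b *\<^sub>R b)" by (simp add: euclidean_representation)
  also have "\<dots> = (\<Sum>b\<in>Basis. inner x b * l b)"
    by (simp add: linear_sum[OF assms] linear_scale[OF assms])
  also have "\<dots> = (\<Sum>b\<in>Basis. l b * inner b x)"
    by (simp add: inner_commute mult.commute)
  also have "\<dots> = inner (\<Sum>b\<in>Basis. l b *\<^sub>R b) x"
    by (simp add: inner_sum_left)
  finally show ?thesis .
qed

lemma main_affine:
  fixes B :: "('n::finite) mmat" and h :: "real^'n \<Rightarrow> real"
  assumes B: "B \<in> Oplus"
  and G: "\<forall>x\<in>ball 0 1. (h has_derivative (\<lambda>X. inner (G x) X)) (at x)"
  and DG: "\<forall>x\<in>ball 0 1. (G has_derivative DG x) (at x)"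
  and hyp: "\<forall>x\<in>ball 0 1. \<forall>X Y. inner (DG x Y) X / Lf x =
      inner (DG (act B x) (dact B x Y)) (dact B x X) / Lf (act B x)"
  shows "\<exists>a c. \<forall>x\<in>ball 0 1. (B *v lift x) $ None * h (act B x) - h x = inner a x + c"
proof -
  define t where "t x = (B *v lift x) $ None" for x
  define s where "s X = (B *v liftv X) $ None" for X
  define Z where "Z X = vbar (B *v liftv X)" for X
  define y where "y = act B"
  define \<Phi> where "\<Phi> X x = s X * h (y x) + inner (G (y x)) (Z X - s X *\<^sub>R y x) - inner (G x) X" for X x
  have tpos: "t x > 0" and yb: "y x \<in> ball 0 1" and Lt: "Lf x = t x * Lf (y x)"
    if "x \<in> ball 0 1" for x
    using key[OF B that] by (simp_all add: t_def y_def)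
  have dy: "(y has_derivative dact B x) (at x)" if "x \<in> ball 0 1" for x
    unfolding y_def by (rule act_deriv) (use tpos[OF that] in \<open>simp add: t_def\<close>)
  have tdX: "t x *\<^sub>R dact B x X = Z X - s X *\<^sub>R y x" if "x \<in> ball 0 1" for x X
    using tpos[OF that] by (simp add: dact_def t_def Z_def s_def y_def)
  have phi0: "(\<Phi> X has_derivative (\<lambda>_. 0)) (at x within ball 0 1)" if x: "x \<in> ball 0 1" for X x
  proof -
    have hy: "((\<lambda>x. h (y x)) has_derivative (\<lambda>Y. inner (G (y x)) (dact B x Y))) (at x)"
      using has_derivative_compose[OF dy[OF x]] G yb[OF x] by blast
    have Gy: "((\<lambda>x. G (y x)) has_derivative (\<lambda>Y. DG (y x) (dact B x Y))) (at x)"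
      using has_derivative_compose[OF dy[OF x]] DG yb[OF x] by blast
    have sy: "((\<lambda>x. Z X - s X *\<^sub>R y x) has_derivative (\<lambda>Y. 0 - s X *\<^sub>R dact B x Y)) (at x)"
      by (rule has_derivative_diff[OF has_derivative_const
            bounded_linear.has_derivative[OF bounded_linear_scaleR_right dy[OF x]]])
    have d1: "((\<lambda>x. s X * h (y x)) has_derivative (\<lambda>Y. s X * inner (G (y x)) (dact B x Y))) (at x)"
      by (rule bounded_linear.has_derivative[OF bounded_linear_mult_right hy])
    have d2: "((\<lambda>x. inner (G (y x)) (Z X - s X *\<^sub>R y x)) has_derivative
       (\<lambda>Y. inner (G (y x)) (0 - s X *\<^sub>R dact B x Y) + inner (DG (y x) (dact B x Y)) (Z X - s X *\<^sub>R y x))) (at x)"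
      by (rule bounded_bilinear.FDERIV[OF bounded_bilinear_inner Gy sy])
    have d3: "((\<lambda>x. inner (G x) X) has_derivative (\<lambda>Y. inner (DG x Y) X)) (at x)"
      using bounded_linear.has_derivative[OF bounded_linear_inner_left, of G "DG x"] DG x by blast
    have d: "(\<Phi> X has_derivative (\<lambda>Y. s X * inner (G (y x)) (dact B x Y) +
       (inner (G (y x)) (0 - s X *\<^sub>R dact B x Y) + inner (DG (y x) (dact B x Y)) (Z X - s X *\<^sub>R y x))
        - inner (DG x Y) X)) (at x)"
      unfolding \<Phi>_def by (rule has_derivative_diff[OF has_derivative_add[OF d1 d2] d3])
    have z: "s X * inner (G (y x)) (dact B x Y) +
       (inner (G (y x)) (0 - s X *\<^sub>R dact B x Y) + inner (DG (y x) (dact B x Y)) (Z X - s X *\<^sub>R y x))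
        - inner (DG x Y) X = 0" for Y
    proof -
      have "inner (DG (y x) (dact B x Y)) (Z X - s X *\<^sub>R y x) = t x * inner (DG (y x) (dact B x Y)) (dact B x X)"
        using tdX[OF x, of X, symmetric] by simp
      also have "\<dots> = inner (DG x Y) X"
      proof -
        have "inner (DG x Y) X / Lf x = inner (DG (y x) (dact B x Y)) (dact B x X) / Lf (y x)"
          using hyp x unfolding y_def by blast
        moreover have "Lf x > 0" "Lf (y x) > 0" using Lf_pos x yb[OF x] by auto
        ultimately show ?thesis using Lt[OF x] tpos[OF x] by (simp add: field_simps)
      qed
      finally show ?thesis by (simp add: algebra_simps)
    qed
    show ?thesis using d unfolding z by (rule has_derivative_at_withinI)
  qed
  have phic: "\<Phi> X x = \<Phi> X 0" if "x \<in> ball 0 1" for X x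
  proof -
    obtain c where "\<forall>x\<in>ball 0 1. \<Phi> X x = c"
      using has_derivative_zero_constant[OF convex_ball phi0] by blast
    then show ?thesis using that by simp
  qed
  define g where "g x = t x * h (y x) - h x" for x
  have dg: "(g has_derivative (\<lambda>X. \<Phi> X x)) (at x)" if x: "x \<in> ball 0 1" for x
  proof -
    have hy: "((\<lambda>x. h (y x)) has_derivative (\<lambda>Y. inner (G (y x)) (dact B x Y))) (at x)"
      using has_derivative_compose[OF dy[OF x]] G yb[OF x] by blast
    have dt: "(t has_derivative s) (at x)"
      unfolding t_def s_def by (rule t_deriv)
    have d: "(g has_derivative (\<lambda>X. t x * inner (G (y x)) (dact B x X) + s X * h (y x) - inner (G x) X)) (at x)"
      unfolding g_def using has_derivative_diff[OF has_derivative_mult[OF dt hy]] G x by blast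
    have e: "t x * inner (G (y x)) (dact B x X) + s X * h (y x) - inner (G x) X = \<Phi> X x" for X
    proof -
      have "t x * inner (G (y x)) (dact B x X) = inner (G (y x)) (t x *\<^sub>R dact B x X)" by simp
      then show ?thesis unfolding tdX[OF x] \<Phi>_def by simp
    qed
    show ?thesis using d unfolding e .
  qed
  define l where "l X = \<Phi> X 0" for X
  have dg': "(g has_derivative l) (at x)" if "x \<in> ball 0 1" for x
    using dg[OF that] phic[OF that] unfolding l_def by simp
  have lin: "bounded_linear l" using dg'[of 0] by (simp add: has_derivative_bounded_linear)
  have "((\<lambda>x. g x - l x) has_derivative (\<lambda>X. l X - l X)) (at x within ball 0 1)" if "x \<in> ball 0 1" for x
    by (rule has_derivative_at_withinI[OF has_derivative_diff[OF dg'[OF that] bounded_linear_imp_has_derivative[OF lin]]])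
  then have "\<And>x. x \<in> ball 0 1 \<Longrightarrow> ((\<lambda>x. g x - l x) has_derivative (\<lambda>X. 0)) (at x within ball 0 1)"
    by simp
  then obtain c where c: "\<forall>x\<in>ball 0 1. g x - l x = c"
    using has_derivative_zero_constant[OF convex_ball, where f="\<lambda>x. g x - l x"] by blast
  show ?thesis
  proof (intro exI ballI)
    fix x :: "real^'n" assume x: "x \<in> ball 0 1"
    have "l x = inner (\<Sum>b\<in>Basis. l b *\<^sub>R b) x"
      by (rule lin_inner) (use lin in \<open>simp add: bounded_linear.linear\<close>)
    then show "(B *v lift x) $ None * h (act B x) - h x = inner (\<Sum>b\<in>Basis. l b *\<^sub>R b) x + c"
      using c x unfolding g_def t_def y_def by force
  qed
qed



lemma vbar_mk: "vbar (mk a c) = a" and mk_None: "mk a c $ None = c"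
  by (simp_all add: vec_eq_iff vbar_def mk_def)

lemma uniq_aff:
  fixes v w :: "'n::finite mvec"
  assumes "\<forall>x\<in>ball (0::real^'n) 1. inner x (vbar v) - v $ None = inner x (vbar w) - w $ None"
  shows "v = w"
proof -
  have n: "v $ None = w $ None" using assms[rule_format, of 0] by simp
  have s: "v $ Some i = w $ Some i" for i
  proof -
    have "(1/2::real) *\<^sub>R axis i 1 \<in> ball (0::real^'n) 1" by simp
    from assms[rule_format, OF this] n
    have "inner ((1/2::real) *\<^sub>R axis i 1) (vbar v) = inner ((1/2::real) *\<^sub>R axis i 1) (vbar w)" by simp
    then show ?thesis by (simp add: inner_axis' vbar_def)
  qed
  show ?thesis unfolding vec_eq_iff
  proof
    fix j show "v $ j = w $ j" using n s by (cases j) auto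
  qed
qed

lemma fun_act_uniq:
  assumes "\<forall>x\<in>ball 0 1. fun_act A v h x = h x" "\<forall>x\<in>ball 0 1. fun_act A w h x = h x"
  shows "v = w"
proof (rule uniq_aff, intro ballI)
  fix x :: "real^'a" assume x: "x \<in> ball 0 1"
  show "inner x (vbar v) - v $ None = inner x (vbar w) - w $ None"
    using assms(1)[rule_format, OF x] assms(2)[rule_format, OF x] unfolding fun_act_def by linarith
qed

lemma act_comp:
  assumes t: "(C *v lift x) $ None \<noteq> 0"
  shows "act D (act C x) = act (D ** C) x"
proof -
  let ?t = "(C *v lift x) $ None"
  have l: "lift (act C x) = (1 / ?t) *\<^sub>R (C *v lift x)"
    unfolding vec_eq_iff
  proof
    fix j show "lift (act C x) $ j = ((1 / ?t) *\<^sub>R (C *v lift x)) $ j"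
      using t by (cases j) (simp_all add: lift_def act_def vbar_def)
  qed
  let ?w = "(D ** C) *v lift x"
  have "act D (act C x) = (1 / (D *v lift (act C x)) $ None) *\<^sub>R vbar (D *v lift (act C x))"
    by (simp only: act_def[of D "act C x"])
  also have "\<dots> = (1 / ((1 / ?t) * ?w $ None)) *\<^sub>R ((1 / ?t) *\<^sub>R vbar ?w)"
    by (simp add: l matrix_vector_mult_scaleR matrix_vector_mul_assoc vbar_scale)
  also have "\<dots> = act (D ** C) x" using t by (simp add: act_def)
  finally show ?thesis .
qed



lemma aff_lemma:
  assumes C: "C \<in> Oplus" and CA: "C ** A = mat 1" and t: "(C *v lift x) $ None \<noteq> 0"
  shows "(C *v lift x) $ None * (inner (act C x) (vbar w) - w $ None)
         = inner x (vbar (A *v w)) - (A *v w) $ None"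
proof -
  let ?u = "C *v lift x" let ?t = "?u $ None"
  have ueq: "vbar ?u = ?t *\<^sub>R act C x" using t by (simp add: act_def)
  have "?t * (inner (act C x) (vbar w) - w $ None) = mink ?u w"
    by (simp add: mink_inner ueq algebra_simps)
  also have "\<dots> = mink ?u (C *v (A *v w))"
    by (simp add: matrix_vector_mul_assoc CA)
  also have "\<dots> = mink (lift x) (A *v w)" using C unfolding Oplus_def by blast
  also have "\<dots> = inner x (vbar (A *v w)) - (A *v w) $ None"
    by (simp add: mink_inner vbar_lift lift_None)
  finally show ?thesis .
qed

lemma comp_law:
  fixes A B :: "('n::finite) mmat"
  assumes iA: "invertible A" and iB: "invertible B" and C: "matrix_inv A \<in> Oplus"
    and x: "x \<in> ball 0 1"
    and hB: "\<forall>z\<in>ball 0 1. fun_act B w h z = h z"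
  shows "fun_act (A ** B) (v + A *v w) h x = fun_act A v h x"
proof -
  define C where "C = matrix_inv A"
  define D where "D = matrix_inv B"
  have Co: "C \<in> Oplus" using C C_def by simp
  let ?t = "(C *v lift x) $ None"
  have tpos: "?t > 0" and Cx: "act C x \<in> ball 0 1" and Lt: "Lf x = ?t * Lf (act C x)"
    using key[OF Co x] by auto
  have inv: "matrix_inv (A ** B) = D ** C" unfolding C_def D_def by (rule minv_mult[OF iA iB])
  have ac: "act (D ** C) x = act D (act C x)" using act_comp[of C x D] tpos by simp
  have hC: "h (act C x) = Lf (act C x) / Lf (act D (act C x)) * h (act D (act C x))
            + inner (act C x) (vbar w) - w $ None"
    using hB[rule_format, OF Cx] unfolding fun_act_def D_def by simp
  have CA: "C ** A = mat 1" unfolding C_def by (rule minv(2)[OF iA])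
  have af: "?t * (inner (act C x) (vbar w) - w $ None) = inner x (vbar (A *v w)) - (A *v w) $ None"
    using aff_lemma[OF Co CA] tpos by simp
  have LC: "Lf (act C x) > 0" using Lf_pos[OF Cx] .
  have "fun_act A v h x = ?t * h (act C x) + inner x (vbar v) - v $ None"
    unfolding fun_act_def C_def[symmetric] using Lt LC by simp
  also have "\<dots> = ?t * (Lf (act C x) / Lf (act D (act C x)) * h (act D (act C x)))
     + ?t * (inner (act C x) (vbar w) - w $ None) + inner x (vbar v) - v $ None"
    unfolding hC by (simp add: algebra_simps)
  also have "\<dots> = Lf x / Lf (act D (act C x)) * h (act D (act C x))
     + (inner x (vbar (A *v w)) - (A *v w) $ None) + inner x (vbar v) - v $ None"
    unfolding af using Lt by simp
  also have "\<dots> = fun_act (A ** B) (v + A *v w) h x"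
    unfolding fun_act_def inv ac by (simp add: vbar_add inner_add_right)
  finally show ?thesis by simp
qed



theorem lemma3p9:
  fixes \<Gamma> :: "('n::finite) mmat set"
    and h :: "real^'n \<Rightarrow> real"
    and Hs :: "real^'n \<Rightarrow> real^'n \<Rightarrow> real^'n \<Rightarrow> real"
  assumes "CARD('n) \<ge> 2"
    and "admissible_group \<Gamma>"
    and "C2_with_hessian h (ball 0 1) Hs"
    and "\<forall>A\<in>\<Gamma>. \<forall>x\<in>ball 0 1. \<forall>X Y.
           Hs x X Y / Lf x =
           Hs (act A x) (frechet_derivative (act A) (at x) X)
                        (frechet_derivative (act A) (at x) Y) / Lf (act A x)"
  shows "\<exists>\<tau>. cocycle \<Gamma> \<tau> \<and> equivariant \<Gamma> \<tau> h \<and>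
           (\<forall>\<sigma>. cocycle \<Gamma> \<sigma> \<and> equivariant \<Gamma> \<sigma> h \<longrightarrow> (\<forall>A\<in>\<Gamma>. \<sigma> A = \<tau> A))"
proof -
  note adm = assms(2)[unfolded admissible_group_def]
  have sub: "\<Gamma> \<subseteq> Oplus" and mul: "\<forall>A\<in>\<Gamma>. \<forall>B\<in>\<Gamma>. A ** B \<in> \<Gamma>"
    and invG: "\<forall>A\<in>\<Gamma>. matrix_inv A \<in> \<Gamma>" and det: "\<forall>A\<in>\<Gamma>. det A > 0"
    using adm by auto
  have inv: "invertible A" if "A \<in> \<Gamma>" for A
    using det that invertible_det_nz by force
  obtain G where G: "\<forall>x\<in>ball 0 1. (h has_derivative (\<lambda>X. inner (G x) X)) (at x)"
    and DGex: "\<forall>x\<in>ball 0 1. \<exists>DG. (G has_derivative DG) (at x) \<and> (\<forall>X Y. Hs x X Y = inner (DG X) Y)"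
    using assms(3) unfolding C2_with_hessian_def by blast
  obtain DG where DG: "\<forall>x\<in>ball 0 1. (G has_derivative DG x) (at x) \<and> (\<forall>X Y. Hs x X Y = inner (DG x X) Y)"
    using bchoice[OF DGex] by blast
  have ex: "\<exists>v. \<forall>x\<in>ball 0 1. fun_act A v h x = h x" if A: "A \<in> \<Gamma>" for A
  proof -
    define B where "B = matrix_inv A"
    have BG: "B \<in> \<Gamma>" using invG A B_def by simp
    have Bo: "B \<in> Oplus" using sub BG by auto
    have hyp: "\<forall>x\<in>ball 0 1. \<forall>X Y. inner (DG x Y) X / Lf x =
      inner (DG (act B x) (dact B x Y)) (dact B x X) / Lf (act B x)"
    proof (intro ballI allI)
      fix x X Y assume x: "x \<in> ball (0::real^'n) 1"
      have tpos: "(B *v lift x) $ None > 0" and yb: "act B x \<in> ball 0 1" using key[OF Bo x] by auto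
      have fd: "frechet_derivative (act B) (at x) = dact B x"
        using frechet_derivative_at[OF act_deriv] tpos by (metis less_irrefl)
      have "Hs x Y X / Lf x = Hs (act B x) (dact B x Y) (dact B x X) / Lf (act B x)"
        using assms(4) BG x fd by metis
      then show "inner (DG x Y) X / Lf x =
          inner (DG (act B x) (dact B x Y)) (dact B x X) / Lf (act B x)"
        using DG x yb by simp
    qed
    obtain a c where ac: "\<forall>x\<in>ball 0 1. (B *v lift x) $ None * h (act B x) - h x = inner a x + c"
      using main_affine[OF Bo G _ hyp] DG by blast
    show ?thesis
    proof (intro exI ballI)
      fix x :: "real^'n" assume x: "x \<in> ball 0 1"
      have tpos: "(B *v lift x) $ None > 0" and yb: "act B x \<in> ball 0 1"
        and Lt: "Lf x = (B *v lift x) $ None * Lf (act B x)" using key[OF Bo x] by auto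
      have Ly: "Lf (act B x) > 0" using Lf_pos[OF yb] .
      have "fun_act A (mk (-a) c) h x = (B *v lift x) $ None * h (act B x) - inner x a - c"
        unfolding fun_act_def B_def[symmetric] vbar_mk mk_None using Lt Ly by simp
      moreover have "(B *v lift x) $ None * h (act B x) - h x = inner a x + c" using ac x by blast
      ultimately show "fun_act A (mk (-a) c) h x = h x" by (simp add: inner_commute)
    qed
  qed
  define \<tau> where "\<tau> A = (SOME v. \<forall>x\<in>ball 0 1. fun_act A v h x = h x)" for A
  have \<tau>: "\<forall>x\<in>ball 0 1. fun_act A (\<tau> A) h x = h x" if "A \<in> \<Gamma>" for A
    unfolding \<tau>_def using someI_ex[OF ex[OF that]] .
  have cont: "continuous_on (ball 0 1) h"
    using G by (intro continuous_at_imp_continuous_on) (auto intro: has_derivative_continuous)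
  have coc: "cocycle \<Gamma> \<tau>" unfolding cocycle_def
  proof (intro ballI)
    fix A B assume A: "A \<in> \<Gamma>" and B: "B \<in> \<Gamma>"
    have AB: "A ** B \<in> \<Gamma>" using mul A B by blast
    have "\<forall>x\<in>ball 0 1. fun_act (A ** B) (\<tau> A + A *v \<tau> B) h x = h x"
    proof
      fix x :: "real^'n" assume x: "x \<in> ball 0 1"
      have "fun_act (A ** B) (\<tau> A + A *v \<tau> B) h x = fun_act A (\<tau> A) h x"
        by (rule comp_law[OF inv[OF A] inv[OF B] _ x \<tau>[OF B]]) (use sub invG A in auto)
      also have "\<dots> = h x" using \<tau>[OF A] x by blast
      finally show "fun_act (A ** B) (\<tau> A + A *v \<tau> B) h x = h x" .
    qed
    then show "\<tau> (A ** B) = \<tau> A + A *v \<tau> B" using fun_act_uniq[OF \<tau>[OF AB]] by blast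
  qed
  have eqv: "equivariant \<Gamma> \<tau> h" unfolding equivariant_def using cont \<tau> by blast
  show ?thesis
  proof (intro exI conjI allI impI ballI)
    show "cocycle \<Gamma> \<tau>" by (rule coc)
    show "equivariant \<Gamma> \<tau> h" by (rule eqv)
    fix \<sigma> A assume s: "cocycle \<Gamma> \<sigma> \<and> equivariant \<Gamma> \<sigma> h" and A: "A \<in> \<Gamma>"
    have "\<forall>x\<in>ball 0 1. fun_act A (\<sigma> A) h x = h x" using s A unfolding equivariant_def by blast
    then show "\<sigma> A = \<tau> A" using fun_act_uniq \<tau>[OF A] by blast
  qed
qed


end
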